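(* Let $D\geq2d+1$, $0<\delta<\Delta/3$ and $k\in\{2,\ldots,D\}$, with the setting and standing assumptions of the context. Let $\mathcal{A}_{k,\delta}$ be the set of $c$ such that $\|c\|<a_{0}$ and $F_{c}(x_{1})\neq F_{c}(\phi_{c}^{k-1}(x_{1}))$ for every $x_{1}\in K$ satisfying $\|x_{1}-\xi_{j}(c)\|\geq3\delta$ for all $j\in\{1,\ldots,m\}$. Then every point of the open ball $\{c:\|c\|<a_{0}\}$ is a Lebesgue point of $\mathcal{A}_{k,\delta}$, and therefore the probability of $\mathcal{A}_{k,\delta}$ relative to this ball is $1$.
   Context: Notation: $\pi_{i}$ is the $i$-th coordinate projection on $\mathbb{R}^{d}$, $\mathbf{e}_{1}=(1,0,\ldots,0)$; for $\alpha\in\mathbb{Z}_{\geq0}^{d}$, $p_{\alpha}(x)=\prod_i(\pi_{i}x)^{\alpha_{i}}$; $\mathcal{I}_{2D-1}$ is the set of $\alpha$ with $|\alpha|\leq2D-1$, of cardinality $D_{\alpha}$; $c=(c_{\alpha})\in\mathbb{R}^{D_{\alpha}}$ with Euclidean norm. $\phi:\mathbb{R}^{d}\to\mathbb{R}^{d}$ is a diffeomorphism, $\phi_{c}(x)=\phi(x)+\mathbf{e}_{1}\sum_{\alpha}c_{\alpha}p_{\alpha}(x)$, and $F_{c}(x)=(\pi_{1}x,\pi_{1}\phi_{c}(x),\ldots,\pi_{1}\phi_{c}^{D-1}(x))$. Standing assumptions: $K$ is a compact ball centered at the origin, $K^{+}\supset K$ a larger compact ball with $\phi^{j}(x)\in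 K^{+}$ for $x\in K$, $0\leq j\leq D-1$; $a_{0}>0$ is such that $\phi_{c}^{j}(x)\in K^{+}$ for $x\in K$, $0\leq j\leq D-1$, $\|c\|\leq a_{0}$; and for all $\|c\|\leq a_{0}$: $\phi_{c}$ is a $C^{3}$ diffeomorphism; $\phi_{c}$ has exactly $m$ fixed points $\xi_{1}(c),\ldots,\xi_{m}(c)$ (labelled consistently in $c$); no other periodic points of period $<2D$; all fixed points hyperbolic with $\pi_{1}\xi_{i}(c)\neq\pi_{1}\xi_{j}(c)$ for $i\neq j$; $F_{c}$ immersive at each fixed point. $\Delta$ is the minimum distance between distinct fixed points of $\phi_{c}$ lying in $K$, over $\|c\|\leq a_{0}$. A point $\mathfrak{a}$ is a Lebesgue point of a measurable set $A$ if $\mu(A\cap B_{\epsilon}(\mathfrak{a}))/\mu(B_{\epsilon}(\mathfrak{a}))\to1$ as $\epsilon\to0$ ($B_\epsilon$ open ball, $\mu$ Lebesgue measure); probability of $A$ relative to $B$ is $\mu(A\cap B)/\mu(B)$. *)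

theory Defs
  imports "HOL-Analysis.Analysis"
begin

definition monom_p :: "('n::finite \<Rightarrow> nat) \<Rightarrow> real^'n \<Rightarrow> real" where
  "monom_p \<alpha> x = (\<Prod>i\<in>UNIV. (x $ i) ^ (\<alpha> i))"

definition multi_idx :: "nat \<Rightarrow> ('n::finite \<Rightarrow> nat) set" where
  "multi_idx N = {\<alpha>. (\<Sum>i\<in>UNIV. \<alpha> i) \<le> N}"

(* phi_c(x) = phi(x) + e_1 * sum_alpha c_alpha p_alpha(x); coordinates of c are
   enumerated by idx :: 'm => multi-index; i1 is the first coordinate *)
definition perturb ::
  "'n::finite \<Rightarrow> ('m::finite \<Rightarrow> ('n \<Rightarrow> nat)) \<Rightarrow> (real^'n \<Rightarrow> real^'n)
     \<Rightarrow> real^'m \<Rightarrow> real^'n \<Rightarrow> real^'n" where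
  "perturb i1 idx \<phi> c x = \<phi> x + (\<Sum>a\<in>UNIV. c $ a * monom_p (idx a) x) *\<^sub>R axis i1 1"

definition delay_map :: "'n::finite \<Rightarrow> nat \<Rightarrow> (real^'n \<Rightarrow> real^'n) \<Rightarrow> real^'n \<Rightarrow> real list" where
  "delay_map i1 D f x = map (\<lambda>j. ((f ^^ j) x) $ i1) [0..<D]"

definition delay_immersive :: "'n::finite \<Rightarrow> nat \<Rightarrow> (real^'n \<Rightarrow> real^'n) \<Rightarrow> real^'n \<Rightarrow> bool" where
  "delay_immersive i1 D f x \<longleftrightarrow>
     (\<exists>L :: nat \<Rightarrow> real^'n \<Rightarrow> real.
        (\<forall>j<D. ((\<lambda>y. ((f ^^ j) y) $ i1) has_derivative L j) (at x)) \<and>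
        (\<forall>v. (\<forall>j<D. L j v = 0) \<longrightarrow> v = 0))"

definition C3 :: "('a::real_normed_vector \<Rightarrow> 'b::real_normed_vector) \<Rightarrow> bool" where
  "C3 f \<longleftrightarrow> (\<exists>(Df :: 'a \<Rightarrow> 'a \<Rightarrow>\<^sub>L 'b) (D2f :: 'a \<Rightarrow> 'a \<Rightarrow>\<^sub>L ('a \<Rightarrow>\<^sub>L 'b))
         (D3f :: 'a \<Rightarrow> 'a \<Rightarrow>\<^sub>L ('a \<Rightarrow>\<^sub>L ('a \<Rightarrow>\<^sub>L 'b))).
      (\<forall>x. (f has_derivative blinfun_apply (Df x)) (at x)) \<and>
      (\<forall>x. (Df has_derivative blinfun_apply (D2f x)) (at x)) \<and>
      (\<forall>x. (D2f has_derivative blinfun_apply (D3f x)) (at x)) \<and>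
      continuous_on UNIV D3f)"

definition C3_diffeo :: "('a::real_normed_vector \<Rightarrow> 'a) \<Rightarrow> bool" where
  "C3_diffeo f \<longleftrightarrow> bij f \<and> C3 f \<and> C3 (inv f)"

definition hyperbolic_fp :: "(real^'n::finite \<Rightarrow> real^'n) \<Rightarrow> real^'n \<Rightarrow> bool" where
  "hyperbolic_fp f x \<longleftrightarrow> f x = x \<and>
     (\<exists>L. (f has_derivative L) (at x) \<and>
        (\<forall>z::complex. cmod z = 1 \<longrightarrow>
           det (\<chi> i j. complex_of_real (matrix L $ i $ j) - (if i = j then z else 0)) \<noteq> 0))"

definition lebesgue_point :: "('a::euclidean_space) set \<Rightarrow> 'a \<Rightarrow> bool" where
  "lebesgue_point A p \<longleftrightarrow>
     ((\<lambda>\<epsilon>. measure lebesgue (A \<inter> ball p \<epsilon>) / measure lebesgue (ball p \<epsilon>)) \<longlongrightarrow> 1) (at_right 0)"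

definition rel_prob :: "('a::euclidean_space) set \<Rightarrow> 'a set \<Rightarrow> real" where
  "rel_prob A B = measure lebesgue (A \<inter> B) / measure lebesgue B"

end

theory Submission
  imports Defs
begin


lemma tri_coef:
  fixes L :: "nat \<Rightarrow> 'a::real_vector \<Rightarrow> real" and u :: "nat \<Rightarrow> 'a"
  assumes lin: "\<And>j. j<D \<Longrightarrow> linear (L j)"
    and tri: "\<And>i j. i<j \<Longrightarrow> j<D \<Longrightarrow> L i (u j) = 0"
    and diag: "\<And>j. j<D \<Longrightarrow> L j (u j) \<noteq> 0"
    and h: "\<And>i. i<D \<Longrightarrow> L i (\<Sum>j<D. \<mu> j *\<^sub>R u j) = 0"
  shows "\<forall>j<D. \<mu> j = 0"
proof -
  have "\<mu> j = 0" if "j < D" for j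
    using that
  proof (induction j rule: less_induct)
    case (less j)
    have "L j (\<Sum>i<D. \<mu> i *\<^sub>R u i) = (\<Sum>i<D. \<mu> i * L j (u i))"
      using lin[OF less.prems] by (simp add: linear_sum linear_scale)
    also have "\<dots> = (\<Sum>i\<in>{j}. \<mu> i * L j (u i))"
    proof (rule sum.mono_neutral_right)
      show "\<forall>i\<in>{..<D} - {j}. \<mu> i * L j (u i) = 0"
      proof
        fix i assume i: "i \<in> {..<D} - {j}"
        show "\<mu> i * L j (u i) = 0"
        proof (cases "i < j")
          case True then show ?thesis using less.IH[of i] less.prems by simp
        next
          case False then have "j < i" using i by auto
          then show ?thesis using tri[of j i] i by simp
        qed
      qed
    qed (use less.prems in auto)
    finally have "\<mu> j * L j (u j) = 0" using h[OF less.prems] by simp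
    then show ?case using diag[OF less.prems] by simp
  qed
  then show ?thesis by blast
qed

lemma exists_Q:
  fixes L :: "nat \<Rightarrow> 'a::euclidean_space \<Rightarrow> real" and u :: "nat \<Rightarrow> 'a"
  assumes lin: "\<And>j. j<D \<Longrightarrow> linear (L j)"
    and tri: "\<And>i j. i<j \<Longrightarrow> j<D \<Longrightarrow> L i (u j) = 0"
    and diag: "\<And>j. j<D \<Longrightarrow> L j (u j) \<noteq> 0"
    and dim: "DIM('a) < DIM('b::euclidean_space) + D"
  obtains Q :: "'a \<Rightarrow> 'b::euclidean_space" and a where "linear Q" "a \<noteq> 0" "\<And>h. a \<bullet> Q h = 0"
    "\<And>h. Q h = 0 \<Longrightarrow> (\<And>j. j<D \<Longrightarrow> L j h = 0) \<Longrightarrow> h = 0"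
proof -
  note coef = tri_coef[OF lin tri diag]
  have inj: "inj_on u {..<D}"
  proof (rule inj_onI)
    fix i j assume i: "i \<in> {..<D}" and j: "j \<in> {..<D}" and e: "u i = u j"
    show "i = j"
    proof (rule ccontr)
      assume "i \<noteq> j"
      then consider "i < j" | "j < i" by linarith
      then show False
      proof cases
        case 1 then show False using tri[of i j] diag[of i] i j e by auto
      next
        case 2 then show False using tri[of j i] diag[of j] i j e by auto
      qed
    qed
  qed
  define U0 where "U0 = u ` {..<D}"
  have finU0: "finite U0" unfolding U0_def by simp
  have cardU0: "card U0 = D" unfolding U0_def using inj by (simp add: card_image)
  have indep: "independent U0"
    unfolding independent_explicit
  proof (intro conjI allI impI ballI)
    show "finite U0" by fact
  next
    fix c v assume s: "(\<Sum>v\<in>U0. c v *\<^sub>R v) = 0" and v: "v \<in> U0"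
    have "(\<Sum>v\<in>U0. c v *\<^sub>R v) = (\<Sum>j<D. c (u j) *\<^sub>R u j)"
      unfolding U0_def by (simp add: sum.reindex[OF inj])
    then have z: "(\<Sum>j<D. c (u j) *\<^sub>R u j) = 0" using s by simp
    have "\<forall>j<D. c (u j) = 0"
    proof (rule coef[where \<mu>="\<lambda>j. c (u j)"])
      fix i assume "i < D"
      show "L i (\<Sum>j<D. c (u j) *\<^sub>R u j) = 0" unfolding z using lin[OF \<open>i<D\<close>] by (rule linear_0)
    qed
    then show "c v = 0" using v unfolding U0_def by auto
  qed
  obtain B where UB: "U0 \<subseteq> B" and indB: "independent B" and spB: "UNIV \<subseteq> span B"
    by (rule maximal_independent_subset_extend[OF subset_UNIV indep])
  have finB: "finite B" using independent_bound[OF indB] by simp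
  have cardB: "card B = DIM('a)"
    using basis_card_eq_dim[OF subset_UNIV spB indB] by simp
  have "D \<le> DIM('a)" using cardU0 cardB card_mono[OF finB UB] by simp
  obtain bs :: 'b where bs: "bs \<in> Basis" using nonempty_Basis by blast
  have c1: "card (B - U0) = DIM('a) - D" using cardB cardU0 UB finB by (simp add: card_Diff_subset finU0)
  have c2: "card (Basis - {bs}) = DIM('b) - 1" using bs by simp
  have cle: "card (B - U0) \<le> card (Basis - {bs})" using c1 c2 dim by linarith
  have fin1: "finite (B - U0)" using finB by simp
  have fin2: "finite (Basis - {bs})" by simp
  obtain e where e: "e ` (B - U0) \<subseteq> Basis - {bs}" and einj: "inj_on e (B - U0)"
    using card_le_inj[OF fin1 fin2 cle] by (elim exE conjE)
  obtain Q :: "'a \<Rightarrow> 'b" where linQ: "linear Q" and QB: "\<forall>x\<in>B. Q x = (if x \<in> U0 then 0 else e x)"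
    using linear_independent_extend[OF indB, of "\<lambda>x. if x \<in> U0 then 0 else e x"] by (elim exE conjE)
  have rep: "\<exists>r. h = (\<Sum>v\<in>B. r v *\<^sub>R v)" for h
  proof -
    have "h \<in> span B" using spB by blast
    then have "h \<in> range (\<lambda>u. \<Sum>v\<in>B. u v *\<^sub>R v)" by (simp only: span_finite[OF finB])
    then show ?thesis by (elim rangeE) blast
  qed
  have Qsum: "Q (\<Sum>v\<in>B. r v *\<^sub>R v) = (\<Sum>v\<in>B. r v *\<^sub>R Q v)" for r
    using linQ by (simp add: linear_sum linear_scale)
  show thesis
  proof (rule that[OF linQ, of bs])
    show "bs \<noteq> 0" using bs nonzero_Basis by blast
  next
    fix h
    obtain r where hr: "h = (\<Sum>v\<in>B. r v *\<^sub>R v)" using rep by blast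
    have "bs \<bullet> Q v = 0" if "v \<in> B" for v
    proof (cases "v \<in> U0")
      case True then show ?thesis using QB that by simp
    next
      case False
      then have "e v \<in> Basis - {bs}" using e that by auto
      then show ?thesis using QB that False bs by (auto simp: inner_not_same_Basis inner_commute)
    qed
    then show "bs \<bullet> Q h = 0" unfolding hr Qsum by (simp add: inner_sum_right)
  next
    fix h assume Qh: "Q h = 0" and Lh: "\<And>j. j<D \<Longrightarrow> L j h = 0"
    obtain r where hr: "h = (\<Sum>v\<in>B. r v *\<^sub>R v)" using rep by blast
    have r0: "r v0 = 0" if v0: "v0 \<in> B - U0" for v0
    proof -
      have ev0: "e v0 \<in> Basis" using e v0 by auto
      have "e v0 \<bullet> Q h = (\<Sum>v\<in>B. r v * (e v0 \<bullet> Q v))"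
        unfolding hr Qsum by (simp add: inner_sum_right)
      also have "\<dots> = (\<Sum>v\<in>{v0}. r v * (e v0 \<bullet> Q v))"
      proof (rule sum.mono_neutral_right)
        show "\<forall>v\<in>B - {v0}. r v * (e v0 \<bullet> Q v) = 0"
        proof
          fix v assume v: "v \<in> B - {v0}"
          show "r v * (e v0 \<bullet> Q v) = 0"
          proof (cases "v \<in> U0")
            case True then show ?thesis using QB v by simp
          next
            case False
            then have "e v \<noteq> e v0" using einj v v0 by (auto dest: inj_onD)
            moreover have "e v \<in> Basis" using e v False by auto
            ultimately show ?thesis using QB v False ev0 by (simp add: inner_not_same_Basis)
          qed
        qed
      qed (use finB v0 in auto)
      also have "\<dots> = r v0" using QB v0 ev0 by simp
      finally show ?thesis using Qh by simp
    qed
    have "h = (\<Sum>v\<in>U0. r v *\<^sub>R v)"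
      unfolding hr
      by (rule sum.mono_neutral_right[OF finB UB]) (use r0 in auto)
    also have "\<dots> = (\<Sum>j<D. r (u j) *\<^sub>R u j)"
      unfolding U0_def by (simp add: sum.reindex[OF inj])
    finally have h2: "h = (\<Sum>j<D. r (u j) *\<^sub>R u j)" .
    have "\<forall>j<D. r (u j) = 0"
    proof (rule coef[where \<mu>="\<lambda>j. r (u j)"])
      fix i assume "i < D"
      show "L i (\<Sum>j<D. r (u j) *\<^sub>R u j) = 0" using Lh[OF \<open>i<D\<close>] h2 by simp
    qed
    then show "h = 0" using h2 by simp
  qed
qed


lemma finite_min_radius:
  fixes z0 :: "'a::metric_space"
  assumes "finite S" and "\<And>s. s \<in> S \<Longrightarrow> \<exists>d>0. \<forall>x. dist x z0 < d \<longrightarrow> P s x"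
  shows "\<exists>d>0. \<forall>x. dist x z0 < d \<longrightarrow> (\<forall>s\<in>S. P s x)"
  using assms
proof (induction S rule: finite_induct)
  case empty then show ?case by (intro exI[of _ 1]) auto
next
  case (insert s S)
  obtain d1 where d1: "d1 > 0" "\<forall>x. dist x z0 < d1 \<longrightarrow> (\<forall>s\<in>S. P s x)"
    using insert by blast
  obtain d2 where d2: "d2 > 0" "\<forall>x. dist x z0 < d2 \<longrightarrow> P s x"
    using insert.prems by blast
  show ?case
    by (rule exI[of _ "min d1 d2"]) (use d1 d2 in auto)
qed

lemma strict_from_cont:
  fixes g :: "'a::euclidean_space \<Rightarrow> real"
  assumes der: "\<And>z. (g has_derivative g' z) (at z)"
    and cont: "\<And>h. isCont (\<lambda>z. g' z h) z0"
    and e: "e > 0"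
  shows "\<exists>r>0. \<forall>z\<in>ball z0 r. \<forall>z'\<in>ball z0 r. \<bar>g z - g z' - g' z0 (z - z')\<bar> \<le> e * norm (z - z')"
proof -
  have lin: "linear (g' z)" for z using der[of z] by (simp add: has_derivative_def bounded_linear.linear)
  have ee: "e / DIM('a) > 0" using e by simp
  have "\<exists>d>0. \<forall>x. dist x z0 < d \<longrightarrow> (\<forall>b\<in>Basis. dist (g' x b) (g' z0 b) < e / DIM('a))"
  proof (rule finite_min_radius)
    fix b :: 'a assume "b \<in> Basis"
    show "\<exists>d>0. \<forall>x. dist x z0 < d \<longrightarrow> dist (g' x b) (g' z0 b) < e / DIM('a)"
      using cont[of b] ee unfolding continuous_at_eps_delta by blast
  qed simp
  then obtain r where r: "r > 0" and rb: "\<And>x b. dist x z0 < r \<Longrightarrow> b \<in> Basis \<Longrightarrow> \<bar>g' x b - g' z0 b\<bar> < e / DIM('a)"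
    by (auto simp: dist_real_def)
  have onb: "onorm (\<lambda>h. g' z h - g' z0 h) \<le> e" if z: "z \<in> ball z0 r" for z
  proof (rule onorm_le)
    fix h :: 'a
    have "g' z h - g' z0 h = (\<Sum>b\<in>Basis. (h \<bullet> b) * (g' z b - g' z0 b))"
    proof -
      have "g' z h = (\<Sum>b\<in>Basis. (h \<bullet> b) * g' z b)"
        using linear_sum[OF lin[of z], of "\<lambda>b. (h \<bullet> b) *\<^sub>R b" Basis] euclidean_representation[of h]
        by (simp add: linear_scale[OF lin])
      moreover have "g' z0 h = (\<Sum>b\<in>Basis. (h \<bullet> b) * g' z0 b)"
        using linear_sum[OF lin[of z0], of "\<lambda>b. (h \<bullet> b) *\<^sub>R b" Basis] euclidean_representation[of h]
        by (simp add: linear_scale[OF lin])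
      ultimately show ?thesis by (simp add: sum_subtractf right_diff_distrib)
    qed
    also have "norm \<dots> \<le> (\<Sum>b\<in>Basis. \<bar>h \<bullet> b\<bar> * \<bar>g' z b - g' z0 b\<bar>)"
      unfolding real_norm_def by (rule order_trans[OF sum_abs]) (simp add: abs_mult)
    also have "\<dots> \<le> (\<Sum>b\<in>(Basis::'a set). norm h * (e / DIM('a)))"
    proof (rule sum_mono)
      fix b :: 'a assume b: "b \<in> Basis"
      have "dist z z0 < r" using z by (simp add: dist_commute)
      then have "\<bar>g' z b - g' z0 b\<bar> \<le> e / DIM('a)" using rb b by (simp add: less_imp_le)
      then show "\<bar>h \<bullet> b\<bar> * \<bar>g' z b - g' z0 b\<bar> \<le> norm h * (e / DIM('a))"
        by (rule mult_mono[OF Basis_le_norm[OF b]]) auto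
    qed
    also have "\<dots> = e * norm h" by simp
    finally show "norm (g' z h - g' z0 h) \<le> e * norm h" .
  qed
  have derf: "((\<lambda>z. g z - g' z0 z) has_derivative (\<lambda>h. g' z h - g' z0 h)) (at z within ball z0 r)" for z
  proof -
    have "(g' z0 has_derivative g' z0) (at z within ball z0 r)"
      using der[of z0] by (intro bounded_linear_imp_has_derivative) (simp add: has_derivative_def)
    then show ?thesis using has_derivative_at_withinI[OF der[of z]] by (rule has_derivative_diff[rotated])
  qed
  show ?thesis
  proof (intro exI[of _ r] conjI ballI r)
    fix z z' assume z: "z \<in> ball z0 r" and z': "z' \<in> ball z0 r"
    have "norm ((g z - g' z0 z) - (g z' - g' z0 z')) \<le> e * norm (z - z')"
      by (rule differentiable_bound[OF convex_ball derf onb z z'])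
    moreover have "g' z0 (z - z') = g' z0 z - g' z0 z'" by (rule linear_diff[OF lin])
    ultimately show "\<bar>g z - g z' - g' z0 (z - z')\<bar> \<le> e * norm (z - z')" by (simp add: algebra_simps)
  qed
qed


lemma lower_bound_lin:
  fixes Q :: "'a::euclidean_space \<Rightarrow> 'b::euclidean_space" and L :: "nat \<Rightarrow> 'a \<Rightarrow> real"
  assumes linQ: "linear Q" and linL: "\<And>j. j<D \<Longrightarrow> linear (L j)"
    and inj: "\<And>h. Q h = 0 \<Longrightarrow> (\<And>j. j<D \<Longrightarrow> L j h = 0) \<Longrightarrow> h = 0"
  shows "\<exists>C>0. \<forall>h. norm h \<le> C * (norm (Q h) + (\<Sum>j<D. \<bar>L j h\<bar>))"
proof -
  define N where "N h = norm (Q h) + (\<Sum>j<D. \<bar>L j h\<bar>)" for h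
  have contN: "continuous_on (sphere 0 1) N"
  proof -
    have "continuous_on UNIV Q" using linQ by (simp add: linear_continuous_on linear_linear)
    moreover have "\<And>j. j<D \<Longrightarrow> continuous_on UNIV (L j)" using linL by (simp add: linear_continuous_on linear_linear)
    ultimately have "continuous_on UNIV N" unfolding N_def
      by (intro continuous_intros) (auto intro: continuous_on_subset)
    then show ?thesis by (rule continuous_on_subset) simp
  qed
  have ne: "sphere (0::'a) 1 \<noteq> {}"
  proof -
    obtain b :: 'a where "b \<in> Basis" using nonempty_Basis by blast
    then have "b \<in> sphere 0 1" by simp
    then show ?thesis by blast
  qed
  obtain s where s: "s \<in> sphere 0 1" and smin: "\<And>t. t \<in> sphere 0 1 \<Longrightarrow> N s \<le> N t"
    using continuous_attains_inf[OF compact_sphere ne contN] by blast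
  have Nnn: "N h \<ge> 0" for h unfolding N_def by (simp add: sum_nonneg)
  have "N s > 0"
  proof (rule ccontr)
    assume "\<not> N s > 0"
    then have "N s = 0" using Nnn[of s] by linarith
    then have "Q s = 0 \<and> (\<forall>j<D. L j s = 0)"
      unfolding N_def by (simp add: add_nonneg_eq_0_iff sum_nonneg sum_nonneg_eq_0_iff)
    then have "s = 0" using inj by blast
    then show False using s by simp
  qed
  define m where "m = N s"
  have m: "m > 0" using \<open>N s > 0\<close> m_def by simp
  have Nscale: "N (c *\<^sub>R h) = \<bar>c\<bar> * N h" for c h
    unfolding N_def using linQ linL
    by (simp add: linear_scale abs_mult sum_distrib_left distrib_left)
  show ?thesis
  proof (intro exI[of _ "1/m"] conjI allI)
    show "1/m > 0" using m by simp
    fix h :: 'a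
    show "norm h \<le> 1 / m * (norm (Q h) + (\<Sum>j<D. \<bar>L j h\<bar>))"
    proof (cases "h = 0")
      case True then show ?thesis using m by (simp add: sum_nonneg)
    next
      case False
      then have nh: "norm h > 0" by simp
      have "(1 / norm h) *\<^sub>R h \<in> sphere 0 1" using nh by simp
      then have "m \<le> N ((1 / norm h) *\<^sub>R h)" using smin m_def by blast
      also have "\<dots> = N h / norm h" using nh by (simp add: Nscale)
      finally have "m * norm h \<le> N h" using nh by (simp add: field_simps)
      then show ?thesis using m unfolding N_def by (simp add: field_simps)
    qed
  qed
qed

lemma neg_proj_local:
  fixes Z :: "'a::euclidean_space set" and p :: "'a \<Rightarrow> 'b::euclidean_space"
    and G :: "nat \<Rightarrow> 'a \<Rightarrow> real" and G' :: "nat \<Rightarrow> 'a \<Rightarrow> 'a \<Rightarrow> real"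
  assumes plip: "\<And>z z'. norm (p z - p z') \<le> norm (z - z')"
    and deriv: "\<And>j z. j<D \<Longrightarrow> (G j has_derivative G' j z) (at z)"
    and cont: "\<And>j h z. j<D \<Longrightarrow> isCont (\<lambda>z. G' j z h) z"
    and zero: "\<And>z j. z\<in>Z \<Longrightarrow> j<D \<Longrightarrow> G j z = 0"
    and tri: "\<And>z. z\<in>Z \<Longrightarrow> \<exists>u. (\<forall>i j. i<j \<longrightarrow> j<D \<longrightarrow> G' i z (u j) = 0) \<and> (\<forall>j<D. G' j z (u j) \<noteq> 0)"
    and dim: "DIM('a) < DIM('b) + D"
    and z0: "z0 \<in> Z"
  shows "\<exists>r>0. negligible (p ` (Z \<inter> ball z0 r))"
proof -
  obtain u where triu: "\<And>i j. i<j \<Longrightarrow> j<D \<Longrightarrow> G' i z0 (u j) = 0" and diagu: "\<And>j. j<D \<Longrightarrow> G' j z0 (u j) \<noteq> 0"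
    using tri[OF z0] by blast
  have linL: "linear (G' j z)" if "j < D" for j z
    using deriv[OF that, of z] by (simp add: has_derivative_def bounded_linear.linear)
  obtain Q :: "'a \<Rightarrow> 'b" and a where linQ: "linear Q" and a: "a \<noteq> 0" and aQ: "\<And>h. a \<bullet> Q h = 0"
    and injQ: "\<And>h. Q h = 0 \<Longrightarrow> (\<And>j. j<D \<Longrightarrow> G' j z0 h = 0) \<Longrightarrow> h = 0"
    using exists_Q[of D "\<lambda>j. G' j z0" u, OF linL triu diagu dim] by blast
  obtain C where C: "C > 0" and Cb: "\<And>h. norm h \<le> C * (norm (Q h) + (\<Sum>j<D. \<bar>G' j z0 h\<bar>))"
    using lower_bound_lin[of Q D "\<lambda>j. G' j z0", OF linQ linL injQ] by blast
  define e where "e = 1 / (2 * C * (real D + 1))"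
  have e: "e > 0" using C by (simp add: e_def)
  have CDe1: "C * (real D * e) = real D / (2 * (real D + 1))"
  proof -
    have "C * (real D * e) = (C * real D) / (2 * C * (real D + 1))" by (simp add: e_def)
    also have "\<dots> = real D / (2 * (real D + 1))" using C by simp
    finally show ?thesis .
  qed
  have CDe2: "real D / (2 * (real D + 1)) \<le> 1/2" by (simp add: field_simps)
  have CDe: "C * (real D * e) \<le> 1/2" using CDe1 CDe2 by simp
  have "\<forall>j<D. \<exists>r>0. \<forall>z\<in>ball z0 r. \<forall>z'\<in>ball z0 r. \<bar>G j z - G j z' - G' j z0 (z - z')\<bar> \<le> e * norm (z - z')"
    using strict_from_cont[OF deriv cont e] by blast
  then obtain rj where rj: "\<And>j. j<D \<Longrightarrow> rj j > 0"
    and rjb: "\<And>j z z'. j<D \<Longrightarrow> z\<in>ball z0 (rj j) \<Longrightarrow> z'\<in>ball z0 (rj j) \<Longrightarrow> \<bar>G j z - G j z' - G' j z0 (z - z')\<bar> \<le> e * norm (z - z')"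
    by metis
  define r where "r = Min (insert 1 (rj ` {..<D}))"
  have r: "r > 0" unfolding r_def using rj by (simp add: Min_gr_iff)
  have rle: "r \<le> rj j" if "j < D" for j unfolding r_def using that by (intro Min_le) auto
  have strict: "\<bar>G j z - G j z' - G' j z0 (z - z')\<bar> \<le> e * norm (z - z')"
    if "j < D" "z \<in> ball z0 r" "z' \<in> ball z0 r" for j z z'
    using rjb[OF that(1)] that rle[OF that(1)] by (auto simp: subset_eq)
  define W where "W = Z \<inter> ball z0 r"
  have key: "norm (z - z') \<le> 2 * C * norm (Q z - Q z')" if z: "z \<in> W" and z': "z' \<in> W" for z z'
  proof -
    have Lb: "\<bar>G' j z0 (z - z')\<bar> \<le> e * norm (z - z')" if j: "j < D" for j
      using strict[OF j, of z z'] z z' zero[OF _ j] unfolding W_def by auto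
    have "(\<Sum>j<D. \<bar>G' j z0 (z - z')\<bar>) \<le> (\<Sum>j<D. e * norm (z - z'))"
      by (rule sum_mono) (simp add: Lb)
    also have "\<dots> = real D * e * norm (z - z')" by simp
    finally have sb: "(\<Sum>j<D. \<bar>G' j z0 (z - z')\<bar>) \<le> real D * e * norm (z - z')" .
    have "norm (z - z') \<le> C * (norm (Q (z - z')) + (\<Sum>j<D. \<bar>G' j z0 (z - z')\<bar>))" by (rule Cb)
    also have "\<dots> \<le> C * norm (Q (z - z')) + C * (real D * e * norm (z - z'))"
      using C sb by (simp add: distrib_left)
    also have "\<dots> \<le> C * norm (Q (z - z')) + 1/2 * norm (z - z')"
    proof -
      have "C * (real D * e * norm (z - z')) = (C * (real D * e)) * norm (z - z')" by (simp add: mult.assoc)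
      also have "\<dots> \<le> 1/2 * norm (z - z')" by (rule mult_right_mono[OF CDe]) simp
      finally show ?thesis by simp
    qed
    finally have "norm (z - z') \<le> 2 * C * norm (Q (z - z'))" by simp
    then show ?thesis by (simp add: linear_diff[OF linQ])
  qed
  define f where "f y = p (SOME z. z \<in> W \<and> Q z = y)" for y
  have fQ: "f (Q z) = p z" if "z \<in> W" for z
  proof -
    have ex: "\<exists>z'. z' \<in> W \<and> Q z' = Q z" using that by blast
    define z' where "z' = (SOME z'. z' \<in> W \<and> Q z' = Q z)"
    have z': "z' \<in> W" "Q z' = Q z" using someI_ex[OF ex] unfolding z'_def by auto
    have "norm (z' - z) \<le> 0" using key[OF z'(1) that] z'(2) by simp
    then have "z' = z" by simp
    then show ?thesis unfolding f_def z'_def[symmetric] by simp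
  qed
  have "negligible (f ` (Q ` W))"
  proof (rule negligible_locally_Lipschitz_image)
    show "DIM('b) \<le> DIM('b)" by simp
    show "negligible (Q ` W)"
      by (rule negligible_subset[OF negligible_hyperplane[of a 0]]) (use a aQ in auto)
    fix y assume "y \<in> Q ` W"
    then obtain z where z: "z \<in> W" "y = Q z" by blast
    show "\<exists>T B. open T \<and> y \<in> T \<and> (\<forall>y'\<in>Q ` W \<inter> T. norm (f y' - f y) \<le> B * norm (y' - y))"
    proof (intro exI[of _ UNIV] exI[of _ "2 * C"] conjI ballI)
      fix y' assume "y' \<in> Q ` W \<inter> UNIV"
      then obtain z' where z': "z' \<in> W" "y' = Q z'" by blast
      have "norm (f y' - f y) = norm (p z' - p z)" using z z' fQ by simp
      also have "\<dots> \<le> norm (z' - z)" by (rule plip)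
      also have "\<dots> \<le> 2 * C * norm (y' - y)" using key[OF z'(1) z(1)] z z' by simp
      finally show "norm (f y' - f y) \<le> 2 * C * norm (y' - y)" .
    qed auto
  qed
  moreover have "f ` (Q ` W) = p ` W" using fQ by (auto simp: image_iff)
  ultimately show ?thesis using r unfolding W_def by auto
qed

lemma neg_proj:
  fixes Z :: "'a::euclidean_space set" and p :: "'a \<Rightarrow> 'b::euclidean_space"
    and G :: "nat \<Rightarrow> 'a \<Rightarrow> real" and G' :: "nat \<Rightarrow> 'a \<Rightarrow> 'a \<Rightarrow> real"
  assumes plip: "\<And>z z'. norm (p z - p z') \<le> norm (z - z')"
    and deriv: "\<And>j z. j<D \<Longrightarrow> (G j has_derivative G' j z) (at z)"
    and cont: "\<And>j h z. j<D \<Longrightarrow> isCont (\<lambda>z. G' j z h) z"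
    and zero: "\<And>z j. z\<in>Z \<Longrightarrow> j<D \<Longrightarrow> G j z = 0"
    and tri: "\<And>z. z\<in>Z \<Longrightarrow> \<exists>u. (\<forall>i j. i<j \<longrightarrow> j<D \<longrightarrow> G' i z (u j) = 0) \<and> (\<forall>j<D. G' j z (u j) \<noteq> 0)"
    and dim: "DIM('a) < DIM('b) + D"
  shows "negligible (p ` Z)"
proof -
  define F where "F = {T. open T \<and> negligible (p ` (Z \<inter> T))}"
  have cov: "Z \<subseteq> \<Union>F"
  proof
    fix z assume "z \<in> Z"
    then obtain r where "r > 0" "negligible (p ` (Z \<inter> ball z r))"
      using neg_proj_local[OF plip deriv cont zero tri dim] by blast
    then show "z \<in> \<Union>F" unfolding F_def using \<open>r>0\<close> by (intro UnionI[of "ball z r"]) auto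
  qed
  obtain F' where F': "F' \<subseteq> F" "countable F'" "\<Union>F' = \<Union>F"
    using Lindelof[of F] unfolding F_def by blast
  have "p ` Z = \<Union>((\<lambda>T. p ` (Z \<inter> T)) ` F')" using cov F'(3) by blast
  moreover have "negligible (\<Union>((\<lambda>T. p ` (Z \<inter> T)) ` F'))"
    using F'(1,2) unfolding F_def by (intro negligible_countable_Union) auto
  ultimately show ?thesis by simp
qed


definition polyN :: "nat \<Rightarrow> (real^'n::finite \<Rightarrow> real) \<Rightarrow> bool" where
  "polyN dg f \<longleftrightarrow> (\<exists>n coef (g::nat \<Rightarrow> 'n \<Rightarrow> nat). (\<forall>l<n. g l \<in> multi_idx dg) \<and> (\<forall>x. f x = (\<Sum>l<n. coef l * monom_p (g l) x)))"

lemma polyN_const: "polyN dg (\<lambda>x. b)"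
  unfolding polyN_def
  by (rule exI[of _ 1], rule exI[of _ "\<lambda>_. b"], rule exI[of _ "\<lambda>_. (\<lambda>_. 0)"]) (simp add: multi_idx_def monom_p_def)

lemma polyN_mono: "polyN dg f \<Longrightarrow> dg \<le> dg' \<Longrightarrow> polyN dg' f"
  unfolding polyN_def multi_idx_def by (meson dual_order.trans mem_Collect_eq)

lemma sum_split_add: "(\<Sum>l<n1+(n2::nat). F l) = (\<Sum>l<n1. F l) + (\<Sum>l<n2. F (n1 + l))"
  by (induction n2) (auto simp: add.assoc)

lemma polyN_add:
  fixes f g :: "real^'n::finite \<Rightarrow> real"
  assumes "polyN dg f" "polyN dg g" shows "polyN dg (\<lambda>x. f x + g x)"
proof -
  obtain n1 c1 and g1 :: "nat \<Rightarrow> 'n \<Rightarrow> nat" where 1: "\<forall>l<n1. g1 l \<in> multi_idx dg" "\<forall>x. f x = (\<Sum>l<n1. c1 l * monom_p (g1 l) x)"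
    using assms(1) unfolding polyN_def by blast
  obtain n2 c2 and g2 :: "nat \<Rightarrow> 'n \<Rightarrow> nat" where 2: "\<forall>l<n2. g2 l \<in> multi_idx dg" "\<forall>x. g x = (\<Sum>l<n2. c2 l * monom_p (g2 l) x)"
    using assms(2) unfolding polyN_def by blast
  define c where "c l = (if l < n1 then c1 l else c2 (l - n1))" for l
  define gg where "gg l = (if l < n1 then g1 l else g2 (l - n1))" for l
  have "(\<Sum>l<n1+n2. c l * monom_p (gg l) x) = (\<Sum>l<n1. c1 l * monom_p (g1 l) x) + (\<Sum>l<n2. c2 l * monom_p (g2 l) x)" for x
    by (simp add: sum_split_add c_def gg_def)
  moreover have "\<forall>l<n1+n2. gg l \<in> multi_idx dg" using 1 2 by (simp add: gg_def)
  ultimately show ?thesis unfolding polyN_def using 1 2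
    by (intro exI[of _ "n1+n2"] exI[of _ c] exI[of _ gg]) auto
qed

lemma polyN_scale:
  fixes f :: "real^'n::finite \<Rightarrow> real"
  assumes "polyN dg f" shows "polyN dg (\<lambda>x. b * f x)"
proof -
  obtain n c and g :: "nat \<Rightarrow> 'n \<Rightarrow> nat" where 1: "\<forall>l<n. g l \<in> multi_idx dg" "\<forall>x. f x = (\<Sum>l<n. c l * monom_p (g l) x)"
    using assms unfolding polyN_def by blast
  show ?thesis unfolding polyN_def using 1
    by (intro exI[of _ n] exI[of _ "\<lambda>l. b * c l"] exI[of _ g]) (simp add: sum_distrib_left mult.assoc)
qed

lemma polyN_sum:
  assumes "finite S" "\<And>s. s \<in> S \<Longrightarrow> polyN dg (f s)" shows "polyN dg (\<lambda>x. \<Sum>s\<in>S. f s x)"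
  using assms by (induction S rule: finite_induct) (auto intro: polyN_add polyN_const)

lemma monom_p_coord: "monom_p \<alpha> x * x $ i = monom_p (\<alpha>(i := Suc (\<alpha> i))) x"
proof -
  have "monom_p (\<alpha>(i := Suc (\<alpha> i))) x = (x $ i) ^ Suc (\<alpha> i) * (\<Prod>j\<in>UNIV - {i}. (x $ j) ^ \<alpha> j)"
    unfolding monom_p_def by (subst prod.remove[of UNIV i]) (auto intro!: prod.cong)
  moreover have "monom_p \<alpha> x = (x $ i) ^ \<alpha> i * (\<Prod>j\<in>UNIV - {i}. (x $ j) ^ \<alpha> j)"
    unfolding monom_p_def by (subst prod.remove[of UNIV i]) auto
  ultimately show ?thesis by (simp add: algebra_simps)
qed

lemma polyN_coord:
  fixes f :: "real^'n::finite \<Rightarrow> real"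
  assumes "polyN dg f" shows "polyN (Suc dg) (\<lambda>x. f x * x $ i)"
proof -
  obtain n c and g :: "nat \<Rightarrow> 'n \<Rightarrow> nat" where 1: "\<forall>l<n. g l \<in> multi_idx dg" "\<forall>x. f x = (\<Sum>l<n. c l * monom_p (g l) x)"
    using assms unfolding polyN_def by blast
  have "(\<Sum>j\<in>UNIV. ((g l)(i := Suc (g l i))) j) = Suc (\<Sum>j\<in>UNIV. g l j)" for l
  proof -
    have "(\<Sum>j\<in>UNIV. ((g l)(i := Suc (g l i))) j) = Suc (g l i) + (\<Sum>j\<in>UNIV - {i}. g l j)"
      by (subst sum.remove[of UNIV i]) (auto intro!: sum.cong)
    moreover have "(\<Sum>j\<in>UNIV. g l j) = g l i + (\<Sum>j\<in>UNIV - {i}. g l j)"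
      by (subst sum.remove[of UNIV i]) auto
    ultimately show ?thesis by simp
  qed
  then have "\<forall>l<n. (g l)(i := Suc (g l i)) \<in> multi_idx (Suc dg)"
    using 1(1) by (simp add: multi_idx_def)
  then show ?thesis unfolding polyN_def using 1
    by (intro exI[of _ n] exI[of _ c] exI[of _ "\<lambda>l. (g l)(i := Suc (g l i))"])
      (simp add: sum_distrib_right mult.assoc monom_p_coord)
qed

lemma polyN_affine_mult:
  assumes "polyN dg f" shows "polyN (Suc dg) (\<lambda>x. f x * ((x - y) \<bullet> v))"
proof -
  have eq: "f x * ((x - y) \<bullet> v) = (\<Sum>i\<in>UNIV. v $ i * (f x * x $ i)) + (- (y \<bullet> v)) * f x" for x
    by (simp add: inner_diff_left inner_vec_def sum_distrib_left sum_subtractf algebra_simps)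
  show ?thesis unfolding eq
    by (intro polyN_add polyN_sum polyN_scale polyN_coord assms polyN_mono[OF assms]) auto
qed

lemma polyN_prod_affine:
  "polyN n (\<lambda>x. \<Prod>i<n. (x - y i) \<bullet> v i)"
proof (induction n)
  case 0 then show ?case by (simp add: polyN_const)
next
  case (Suc n)
  show ?case using polyN_affine_mult[OF Suc, of "y n" "v n"] by (simp add: mult.commute)
qed


lemma polyN_to_vec:
  fixes idx :: "'m::finite \<Rightarrow> ('n::finite \<Rightarrow> nat)" and q :: "real^'n \<Rightarrow> real"
  assumes idx_bij: "bij_betw idx UNIV (multi_idx dg)" and pq: "polyN dg q"
  shows "\<exists>w::real^'m. \<forall>x. (\<Sum>a\<in>UNIV. w$a * monom_p (idx a) x) = q x"
proof -
  obtain cnt coef and g :: "nat \<Rightarrow> 'n \<Rightarrow> nat" where g: "\<forall>l<cnt. g l \<in> multi_idx dg"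
    and q: "\<forall>x. q x = (\<Sum>l<cnt. coef l * monom_p (g l) x)"
    using pq unfolding polyN_def by blast
  define w :: "real^'m" where "w = (\<chi> a. \<Sum>l<cnt. if g l = idx a then coef l else 0)"
  have one: "(\<Sum>a\<in>UNIV. if idx a = g l then t else 0) = t" if l: "l < cnt" for l t
  proof -
    obtain a0 where a0: "idx a0 = g l" using g l idx_bij unfolding bij_betw_def by (metis imageE)
    have "\<And>a. idx a = g l \<longleftrightarrow> a = a0" using a0 idx_bij unfolding bij_betw_def inj_on_def by auto
    then show ?thesis by simp
  qed
  show ?thesis
  proof (intro exI[of _ w] allI)
    fix x
    have "(\<Sum>a\<in>UNIV. w$a * monom_p (idx a) x) = (\<Sum>a\<in>UNIV. \<Sum>l<cnt. if idx a = g l then coef l * monom_p (g l) x else 0)"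
      unfolding w_def by (auto simp: sum_distrib_right intro!: sum.cong)
    also have "\<dots> = (\<Sum>l<cnt. \<Sum>a\<in>UNIV. if idx a = g l then coef l * monom_p (g l) x else 0)"
      by (rule sum.swap)
    also have "\<dots> = (\<Sum>l<cnt. coef l * monom_p (g l) x)"
      by (rule sum.cong) (auto simp: one)
    finally show "(\<Sum>a\<in>UNIV. w$a * monom_p (idx a) x) = q x" using q by simp
  qed
qed

lemma interp:
  fixes y :: "nat \<Rightarrow> real^'n::finite" and idx :: "'m::finite \<Rightarrow> ('n \<Rightarrow> nat)"
  assumes idx_bij: "bij_betw idx UNIV (multi_idx dg)" and nN: "n \<le> dg"
    and dist: "\<And>i. i < n \<Longrightarrow> y i \<noteq> y n"
  shows "\<exists>w::real^'m. (\<forall>i<n. (\<Sum>a\<in>UNIV. w$a * monom_p (idx a) (y i)) = 0) \<and>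
                      (\<Sum>a\<in>UNIV. w$a * monom_p (idx a) (y n)) = 1"
proof -
  define v where "v i = (1 / (norm (y n - y i))\<^sup>2) *\<^sub>R (y n - y i)" for i
  define q where "q x = (\<Prod>i<n. (x - y i) \<bullet> v i)" for x
  have "polyN n q" unfolding q_def by (rule polyN_prod_affine)
  then have "polyN dg q" using nN by (rule polyN_mono)
  then obtain w :: "real^'m" where w: "\<And>x. (\<Sum>a\<in>UNIV. w$a * monom_p (idx a) x) = q x"
    using polyN_to_vec[OF idx_bij] by blast
  have "q (y i) = 0" if "i < n" for i
    unfolding q_def using that by (intro prod_zero) (auto intro!: bexI[of _ i])
  moreover have "q (y n) = 1"
    unfolding q_def
  proof (rule prod.neutral, rule ballI)
    fix i assume "i \<in> {..<n}"
    then have "y i \<noteq> y n" using dist by auto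
    then have "y n - y i \<noteq> 0" by simp
    then show "(y n - y i) \<bullet> v i = 1"
      unfolding v_def by (simp add: power2_norm_eq_inner)
  qed
  ultimately show ?thesis by (intro exI[of _ w]) (simp add: w)
qed


definition mp' :: "('n::finite \<Rightarrow> nat) \<Rightarrow> real^'n \<Rightarrow> real^'n \<Rightarrow> real" where
  "mp' \<alpha> x k = (\<Sum>i\<in>UNIV. (of_nat (\<alpha> i) * k$i * (x$i)^(\<alpha> i - 1)) * (\<Prod>j\<in>UNIV - {i}. (x$j)^(\<alpha> j)))"

lemma mp_deriv: "(monom_p \<alpha> has_derivative mp' \<alpha> x) (at x within S)"
proof -
  have "((\<lambda>x. \<Prod>i\<in>UNIV. (x$i)^(\<alpha> i)) has_derivative mp' \<alpha> x) (at x within S)"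
    unfolding mp'_def
    by (rule has_derivative_prod, rule has_derivative_power, rule bounded_linear_imp_has_derivative, rule bounded_linear_vec_nth)
  then show ?thesis unfolding monom_p_def[abs_def] .
qed

lemma mp'_cont: "continuous_on UNIV (\<lambda>z. mp' \<alpha> (A z) (B z))" if "continuous_on UNIV A" "continuous_on UNIV B"
  unfolding mp'_def by (intro continuous_intros that)

lemma mp_cont: "continuous_on UNIV (\<lambda>z. monom_p \<alpha> (A z))" if "continuous_on UNIV A"
  unfolding monom_p_def by (intro continuous_intros that)

lemma mp'_linear: "linear (mp' \<alpha> x)"
  unfolding mp'_def by (intro linearI) (simp_all add: algebra_simps sum.distrib sum_distrib_left)

definition Psi :: "'n::finite \<Rightarrow> ('m::finite \<Rightarrow> ('n \<Rightarrow> nat)) \<Rightarrow> (real^'n \<Rightarrow> real^'n) \<Rightarrow> ((real^'m) \<times> (real^'n)) \<Rightarrow> ((real^'m) \<times> (real^'n))" where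
  "Psi i1 idx \<phi> z = (fst z, perturb i1 idx \<phi> (fst z) (snd z))"

definition DPsi :: "'n::finite \<Rightarrow> ('m::finite \<Rightarrow> ('n \<Rightarrow> nat)) \<Rightarrow> (real^'n \<Rightarrow> real^'n \<Rightarrow> real^'n) \<Rightarrow> ((real^'m) \<times> (real^'n)) \<Rightarrow> ((real^'m) \<times> (real^'n)) \<Rightarrow> ((real^'m) \<times> (real^'n))" where
  "DPsi i1 idx Df z h = (fst h, Df (snd z) (snd h) +
     (\<Sum>a\<in>UNIV. (fst h)$a * monom_p (idx a) (snd z) + (fst z)$a * mp' (idx a) (snd z) (snd h)) *\<^sub>R axis i1 1)"

lemma Psi_deriv:
  fixes \<phi> :: "real^'n::finite \<Rightarrow> real^'n" and i1 :: 'n and idx :: "'m::finite \<Rightarrow> ('n \<Rightarrow> nat)"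
  assumes der: "\<And>x. (\<phi> has_derivative Df x) (at x)"
  shows "(Psi i1 idx \<phi> has_derivative DPsi i1 idx Df z) (at z)"
proof -
  have d1: "((\<lambda>z. \<phi> (snd z)) has_derivative (\<lambda>h. Df (snd z) (snd h))) (at z)"
    using has_derivative_compose[OF has_derivative_snd[of "\<lambda>x. x" "\<lambda>x. x"] der] by (simp add: has_derivative_ident)
  have d2: "((\<lambda>z. (fst z)$a * monom_p (idx a) (snd z)) has_derivative
      (\<lambda>h. (fst z)$a * mp' (idx a) (snd z) (snd h) + (fst h)$a * monom_p (idx a) (snd z))) (at z)" for a
  proof -
    have da: "((\<lambda>z. (fst z)$a) has_derivative (\<lambda>h. (fst h)$a)) (at z)"
      by (rule bounded_linear_imp_has_derivative) (intro bounded_linear_compose[OF bounded_linear_vec_nth bounded_linear_fst])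
    have db: "((\<lambda>z. monom_p (idx a) (snd z)) has_derivative (\<lambda>h. mp' (idx a) (snd z) (snd h))) (at z)"
      using has_derivative_compose[OF has_derivative_snd[of "\<lambda>x. x" "\<lambda>x. x"] mp_deriv] by (simp add: has_derivative_ident)
    show ?thesis using has_derivative_mult[OF da db] .
  qed
  have d3: "((\<lambda>z. (\<Sum>a\<in>UNIV. (fst z)$a * monom_p (idx a) (snd z)) *\<^sub>R (axis i1 1 :: real^'n)) has_derivative
      (\<lambda>h. (\<Sum>a\<in>UNIV. (fst h)$a * monom_p (idx a) (snd z) + (fst z)$a * mp' (idx a) (snd z) (snd h)) *\<^sub>R axis i1 1)) (at z)"
    using has_derivative_scaleR_left[OF has_derivative_sum[OF d2]] by (simp add: add.commute)
  have "((\<lambda>z. (fst z, perturb i1 idx \<phi> (fst z) (snd z))) has_derivative DPsi i1 idx Df z) (at z)"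
    unfolding perturb_def DPsi_def
    by (intro has_derivative_Pair has_derivative_fst[of "\<lambda>x. x" "\<lambda>x. x", OF has_derivative_ident] has_derivative_add d1 d3)
  then show ?thesis unfolding Psi_def[abs_def] .
qed

fun DIt :: "'n::finite \<Rightarrow> ('m::finite \<Rightarrow> ('n \<Rightarrow> nat)) \<Rightarrow> (real^'n \<Rightarrow> real^'n) \<Rightarrow> (real^'n \<Rightarrow> real^'n \<Rightarrow> real^'n) \<Rightarrow> nat \<Rightarrow> ((real^'m) \<times> (real^'n)) \<Rightarrow> ((real^'m) \<times> (real^'n)) \<Rightarrow> ((real^'m) \<times> (real^'n))" where
  "DIt i1 idx \<phi> Df 0 z h = h"
| "DIt i1 idx \<phi> Df (Suc j) z h = DPsi i1 idx Df ((Psi i1 idx \<phi> ^^ j) z) (DIt i1 idx \<phi> Df j z h)"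

lemma DIt_deriv:
  fixes \<phi> :: "real^'n::finite \<Rightarrow> real^'n" and i1 :: 'n and idx :: "'m::finite \<Rightarrow> ('n \<Rightarrow> nat)"
  assumes der: "\<And>x. (\<phi> has_derivative Df x) (at x)"
  shows "((Psi i1 idx \<phi> ^^ j) has_derivative DIt i1 idx \<phi> Df j z) (at z)"
proof (induction j)
  case 0 then show ?case by (simp add: has_derivative_ident[unfolded id_def[symmetric]] id_def)
next
  case (Suc j)
  have "((Psi i1 idx \<phi> \<circ> (Psi i1 idx \<phi> ^^ j)) has_derivative (DPsi i1 idx Df ((Psi i1 idx \<phi> ^^ j) z) \<circ> DIt i1 idx \<phi> Df j z)) (at z)"
    by (rule diff_chain_at[OF Suc Psi_deriv[OF der]])
  then show ?case by (simp add: o_def)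
qed

lemma Psi_iter: "(Psi i1 idx \<phi> ^^ j) (c, x) = (c, (perturb i1 idx \<phi> c ^^ j) x)"
  by (induction j) (auto simp: Psi_def)

lemma Psi_cont:
  assumes cphi: "continuous_on UNIV \<phi>"
  shows "continuous_on UNIV (Psi i1 idx \<phi> ^^ j)"
proof (induction j)
  case 0 then show ?case by (simp add: continuous_on_id)
next
  case (Suc j)
  have c1: "continuous_on UNIV (Psi i1 idx \<phi>)"
    unfolding Psi_def[abs_def] perturb_def
    by (intro continuous_intros continuous_on_compose2[OF cphi] mp_cont) auto
  show ?case using continuous_on_compose[OF Suc continuous_on_subset[OF c1]] by (simp add: o_def)
qed

lemma DIt_cont:
  assumes cphi: "continuous_on UNIV \<phi>"
    and cDf: "continuous_on UNIV (\<lambda>p. Df (fst p) (snd p))"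
  shows "continuous_on UNIV (\<lambda>z. DIt i1 idx \<phi> Df j z h)"
proof (induction j)
  case 0 then show ?case by simp
next
  case (Suc j)
  let ?A = "\<lambda>z. (Psi i1 idx \<phi> ^^ j) z" and ?B = "\<lambda>z. DIt i1 idx \<phi> Df j z h"
  have cA: "continuous_on UNIV ?A" by (rule Psi_cont[OF cphi])
  have cB: "continuous_on UNIV ?B" by (rule Suc)
  have cD: "continuous_on UNIV (\<lambda>z. Df (snd (?A z)) (snd (?B z)))"
  proof -
    have cp: "continuous_on UNIV (\<lambda>z. (snd (?A z), snd (?B z)))" by (intro continuous_intros cA cB)
    show ?thesis using continuous_on_compose2[OF cDf cp] by simp
  qed
  show ?case
    unfolding DIt.simps DPsi_def
    by (intro continuous_intros cA cB cD mp_cont mp'_cont)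
qed


lemma DIt_fst: "fst (DIt i1 idx \<phi> Df l z h) = fst h"
  by (induction l) (simp_all add: DPsi_def)

lemma DIt_tri:
  fixes \<phi> :: "real^'n::finite \<Rightarrow> real^'n" and i1 :: 'n and idx :: "'m::finite \<Rightarrow> ('n \<Rightarrow> nat)"
    and w c0 :: "real^'m"
  assumes lin: "\<And>x. linear (Df x)"
    and van: "\<And>i. i < n \<Longrightarrow> (\<Sum>a\<in>UNIV. w$a * monom_p (idx a) ((perturb i1 idx \<phi> c0 ^^ i) x0)) = 0"
  shows "\<forall>l\<le>n. snd (DIt i1 idx \<phi> Df l (c0, x0) (w, 0)) = 0"
    and "snd (DIt i1 idx \<phi> Df (Suc n) (c0, x0) (w, 0)) =
          (\<Sum>a\<in>UNIV. w$a * monom_p (idx a) ((perturb i1 idx \<phi> c0 ^^ n) x0)) *\<^sub>R axis i1 1"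
proof -
  have l0: "mp' \<alpha> x 0 = 0" for \<alpha> x using linear_0[OF mp'_linear] .
  have d0: "Df x 0 = 0" for x using linear_0[OF lin] .
  have step: "snd (DIt i1 idx \<phi> Df (Suc l) (c0, x0) (w, 0)) =
      (\<Sum>a\<in>UNIV. w$a * monom_p (idx a) ((perturb i1 idx \<phi> c0 ^^ l) x0)) *\<^sub>R axis i1 1"
    if "snd (DIt i1 idx \<phi> Df l (c0, x0) (w, 0)) = 0" for l
  proof -
    have "DIt i1 idx \<phi> Df l (c0, x0) (w, 0) = (w, 0)"
      using that DIt_fst[of i1 idx \<phi> Df l "(c0, x0)" "(w, 0)"] by (metis prod.collapse fst_conv)
    then show ?thesis by (simp add: DPsi_def Psi_iter d0 l0)
  qed
  show A: "\<forall>l\<le>n. snd (DIt i1 idx \<phi> Df l (c0, x0) (w, 0)) = 0"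
  proof (intro allI impI)
    fix l assume "l \<le> n"
    then show "snd (DIt i1 idx \<phi> Df l (c0, x0) (w, 0)) = 0"
    proof (induction l)
      case 0 then show ?case by simp
    next
      case (Suc l)
      then have "snd (DIt i1 idx \<phi> Df l (c0, x0) (w, 0)) = 0" by simp
      then show ?case using step van[of l] Suc.prems by simp
    qed
  qed
  show "snd (DIt i1 idx \<phi> Df (Suc n) (c0, x0) (w, 0)) =
          (\<Sum>a\<in>UNIV. w$a * monom_p (idx a) ((perturb i1 idx \<phi> c0 ^^ n) x0)) *\<^sub>R axis i1 1"
    using step A by simp
qed


theorem lemma17:
  fixes \<phi> :: "real^'n::finite \<Rightarrow> real^'n"
    and i1 :: 'n
    and idx :: "'m::finite \<Rightarrow> ('n \<Rightarrow> nat)"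
    and D m k :: nat
    and r R a0 \<delta> :: real
    and \<xi> :: "nat \<Rightarrow> real^'m \<Rightarrow> real^'n"
  defines "\<phi>c \<equiv> perturb i1 idx \<phi>"
    and "K \<equiv> cball (0::real^'n) r"
    and "Kp \<equiv> cball (0::real^'n) R"
    and "\<Delta> \<equiv> (INF p \<in> {(c, i, j). norm c \<le> a0 \<and> i \<in> {1..m} \<and> j \<in> {1..m} \<and> i \<noteq> j
                        \<and> \<xi> i c \<in> cball 0 r \<and> \<xi> j c \<in> cball 0 r}.
                 ereal (dist (\<xi> (fst (snd p)) (fst p)) (\<xi> (snd (snd p)) (fst p))))"
    and "A \<equiv> {c. norm c < a0 \<and>
               (\<forall>x1\<in>cball 0 r. (\<forall>j\<in>{1..m}. norm (x1 - \<xi> j c) \<ge> 3 * \<delta>) \<longrightarrow>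
                   delay_map i1 D (perturb i1 idx \<phi> c) x1 \<noteq>
                   delay_map i1 D (perturb i1 idx \<phi> c) ((perturb i1 idx \<phi> c ^^ (k - 1)) x1))}"
  assumes idx_bij: "bij_betw idx UNIV (multi_idx (2 * D - 1))"
    and D_ge: "D \<ge> 2 * CARD('n) + 1"
    and r_pos: "0 < r" and rR: "r < R"
    and phi_Kp: "\<forall>x\<in>K. \<forall>j\<le>D - 1. (\<phi> ^^ j) x \<in> Kp"
    and a0_pos: "0 < a0"
    and phic_Kp: "\<forall>c. norm c \<le> a0 \<longrightarrow> (\<forall>x\<in>K. \<forall>j\<le>D - 1. (\<phi>c c ^^ j) x \<in> Kp)"
    and diffeo: "\<forall>c. norm c \<le> a0 \<longrightarrow> C3_diffeo (\<phi>c c)"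
    and fixpts: "\<forall>c. norm c \<le> a0 \<longrightarrow> {x. \<phi>c c x = x} = (\<lambda>i. \<xi> i c) ` {1..m}"
    and fix_inj: "\<forall>c. norm c \<le> a0 \<longrightarrow> inj_on (\<lambda>i. \<xi> i c) {1..m}"
    and fix_cont: "\<forall>i\<in>{1..m}. continuous_on (cball 0 a0) (\<xi> i)"
    and no_periodic: "\<forall>c. norm c \<le> a0 \<longrightarrow>
        (\<forall>x n. 1 \<le> n \<and> n < 2 * D \<and> (\<phi>c c ^^ n) x = x \<longrightarrow> \<phi>c c x = x)"
    and hyp: "\<forall>c. norm c \<le> a0 \<longrightarrow> (\<forall>i\<in>{1..m}. hyperbolic_fp (\<phi>c c) (\<xi> i c))"
    and sep: "\<forall>c. norm c \<le> a0 \<longrightarrow>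
        (\<forall>i\<in>{1..m}. \<forall>j\<in>{1..m}. i \<noteq> j \<longrightarrow> \<xi> i c $ i1 \<noteq> \<xi> j c $ i1)"
    and immersive: "\<forall>c. norm c \<le> a0 \<longrightarrow>
        (\<forall>i\<in>{1..m}. delay_immersive i1 D (\<phi>c c) (\<xi> i c))"
    and delta_pos: "0 < \<delta>" and delta_lt: "ereal (3 * \<delta>) < \<Delta>"
    and k_range: "k \<in> {2..D}"
  shows "(\<forall>p\<in>ball 0 a0. lebesgue_point A p) \<and> rel_prob A (ball 0 a0) = 1"
proof -
  let ?e1 = "axis i1 1 :: real^'n"
  have k2: "2 \<le> k" and kD: "k \<le> D" using k_range by auto
  have phi0: "\<phi>c 0 = \<phi>" unfolding \<phi>c_def perturb_def by (simp add: fun_eq_iff)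
  have "C3 \<phi>" using diffeo[rule_format, of 0] phi0 a0_pos by (simp add: C3_diffeo_def)
  then obtain Dfb :: "real^'n \<Rightarrow> (real^'n) \<Rightarrow>\<^sub>L (real^'n)" and D2 :: "real^'n \<Rightarrow> (real^'n) \<Rightarrow>\<^sub>L ((real^'n) \<Rightarrow>\<^sub>L (real^'n))"
    and D3 :: "real^'n \<Rightarrow> (real^'n) \<Rightarrow>\<^sub>L ((real^'n) \<Rightarrow>\<^sub>L ((real^'n) \<Rightarrow>\<^sub>L (real^'n)))"
    where C3c: "(\<forall>x. (\<phi> has_derivative blinfun_apply (Dfb x)) (at x)) \<and>
      (\<forall>x. (Dfb has_derivative blinfun_apply (D2 x)) (at x)) \<and>
      (\<forall>x. (D2 has_derivative blinfun_apply (D3 x)) (at x)) \<and>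
      continuous_on UNIV D3"
    unfolding C3_def by (elim exE) (erule that)
  have der0: "\<And>x. (\<phi> has_derivative blinfun_apply (Dfb x)) (at x)" using C3c by simp
  have der2: "\<And>x. (Dfb has_derivative blinfun_apply (D2 x)) (at x)" using C3c by simp
  define Df where "Df x = blinfun_apply (Dfb x)" for x
  have der: "\<And>x. (\<phi> has_derivative Df x) (at x)" using der0 by (simp add: Df_def)
  have cDfb: "continuous_on UNIV Dfb"
    by (rule continuous_at_imp_continuous_on, rule ballI, rule has_derivative_continuous[OF der2])
  have cDf: "continuous_on UNIV (\<lambda>p. Df (fst p) (snd p))"
    unfolding Df_def
  proof (rule bounded_bilinear.continuous_on[OF bounded_bilinear_blinfun_apply])
    show "continuous_on UNIV (\<lambda>x. Dfb (fst x))"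
      using continuous_on_compose2[OF cDfb continuous_on_fst[OF continuous_on_id]] by simp
  qed (intro continuous_intros)
  have cphi: "continuous_on UNIV \<phi>"
    by (rule continuous_at_imp_continuous_on, rule ballI, rule has_derivative_continuous[OF der])
  have linDf: "linear (Df x)" for x unfolding Df_def by (simp add: blinfun.bounded_linear_right bounded_linear.linear)
  define \<Psi> where "\<Psi> = Psi i1 idx \<phi>"
  define G where "G = (\<lambda>j z. (snd ((\<Psi>^^j) z))$i1 - (snd ((\<Psi>^^(j+k-1)) z))$i1)"
  define G' where "G' = (\<lambda>j z h. (snd (DIt i1 idx \<phi> Df j z h))$i1 - (snd (DIt i1 idx \<phi> Df (j+k-1) z h))$i1)"
  have bl: "bounded_linear (\<lambda>p::(real^'m)\<times>(real^'n). (snd p)$i1)"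
    by (intro bounded_linear_compose[OF bounded_linear_vec_nth bounded_linear_snd])
  have d1: "((\<lambda>z. (snd ((\<Psi>^^j) z))$i1) has_derivative (\<lambda>h. (snd (DIt i1 idx \<phi> Df j z h))$i1)) (at z)" for j z
    using bounded_linear.has_derivative[OF bl DIt_deriv[OF der]] unfolding \<Psi>_def by simp
  have derG: "(G j has_derivative G' j z) (at z)" for j z
    unfolding G_def G'_def by (rule has_derivative_diff[OF d1 d1])
  have c1: "continuous_on UNIV (\<lambda>z. (snd (DIt i1 idx \<phi> Df j z h))$i1)" for j h
    using continuous_on_compose2[OF bounded_linear.continuous_on[OF bl continuous_on_id] DIt_cont[OF cphi cDf, of i1 idx j h] subset_UNIV]
    by simp
  have contG: "isCont (\<lambda>z. G' j z h) z" for j h z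
  proof -
    have "continuous_on UNIV (\<lambda>z. G' j z h)"
      unfolding G'_def by (rule continuous_on_diff[OF c1 c1])
    then show ?thesis using continuous_on_eq_continuous_at[OF open_UNIV] by blast
  qed
  define Z where "Z = {z. norm (fst z) < a0 \<and> snd z \<in> cball 0 r \<and> (\<forall>j\<in>{1..m}. 3 * \<delta> \<le> norm (snd z - \<xi> j (fst z)))
                        \<and> (\<forall>j<D. G j z = 0)}"
  have Giter: "G j (c, x) = ((\<phi>c c ^^ j) x)$i1 - ((\<phi>c c ^^ (j+k-1)) x)$i1" for j c x
    unfolding G_def \<Psi>_def \<phi>c_def by (simp add: Psi_iter)
  have tri: "\<exists>u. (\<forall>i j. i<j \<longrightarrow> j<D \<longrightarrow> G' i z (u j) = 0) \<and> (\<forall>j<D. G' j z (u j) \<noteq> 0)" if zZ: "z \<in> Z" for z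
  proof -
    obtain c0 x0 where z: "z = (c0, x0)" by (cases z)
    have c0: "norm c0 \<le> a0" and x0far: "\<forall>j\<in>{1..m}. 3 * \<delta> \<le> norm (x0 - \<xi> j c0)"
      using zZ unfolding Z_def z by auto
    have bijc: "bij (\<phi>c c0)" using diffeo c0 by (simp add: C3_diffeo_def)
    have injc: "inj (\<phi>c c0)" using bijc by (simp add: bij_def)
    define y where "y l = (\<phi>c c0 ^^ l) x0" for l
    have notfix: "\<phi>c c0 x0 \<noteq> x0"
    proof
      assume "\<phi>c c0 x0 = x0"
      then have "x0 \<in> (\<lambda>i. \<xi> i c0) ` {1..m}" using fixpts c0 by blast
      then obtain j where j: "j \<in> {1..m}" "x0 = \<xi> j c0" by blast
      then have "3 * \<delta> \<le> norm (x0 - \<xi> j c0)" using x0far by blast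
      then show False using j(2) delta_pos by simp
    qed
    have ydist: "y i \<noteq> y n" if "i < n" "n < i + 2 * D" for i n
    proof
      assume e: "y i = y n"
      define p where "p = n - i"
      have p: "1 \<le> p" "p < 2 * D" "n = p + i" using that by (auto simp: p_def)
      have "(\<phi>c c0 ^^ p) (y i) = y i" using e p(3) unfolding y_def by (simp add: funpow_add)
      then have "\<phi>c c0 (y i) = y i" using no_periodic c0 p by blast
      then have "(\<phi>c c0 ^^ i) (\<phi>c c0 x0) = (\<phi>c c0 ^^ i) x0"
        unfolding y_def by (simp add: funpow_swap1)
      then have "\<phi>c c0 x0 = x0" using inj_fn[OF injc, of i] by (simp add: inj_eq)
      then show False using notfix by simp
    qed
    define nj where "nj j = j + k - 2" for j
    have "\<forall>j. \<exists>w::real^'m. j < D \<longrightarrow> (\<forall>i<nj j. (\<Sum>a\<in>UNIV. w$a * monom_p (idx a) (y i)) = 0) \<and>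
                      (\<Sum>a\<in>UNIV. w$a * monom_p (idx a) (y (nj j))) = 1"
    proof (intro allI impI)
      fix j
      show "\<exists>w::real^'m. j < D \<longrightarrow> (\<forall>i<nj j. (\<Sum>a\<in>UNIV. w$a * monom_p (idx a) (y i)) = 0) \<and>
                      (\<Sum>a\<in>UNIV. w$a * monom_p (idx a) (y (nj j))) = 1"
      proof (cases "j < D")
        case True
        have "nj j \<le> 2 * D - 1" using True kD unfolding nj_def by linarith
        moreover have "\<And>i. i < nj j \<Longrightarrow> y i \<noteq> y (nj j)"
          using ydist True kD unfolding nj_def by simp
        ultimately show ?thesis using interp[OF idx_bij, of "nj j" y] by blast
      qed simp
    qed
    then obtain W where W: "\<And>j. j < D \<Longrightarrow> (\<forall>i<nj j. (\<Sum>a\<in>UNIV. W j $ a * monom_p (idx a) (y i)) = 0) \<and>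
                      (\<Sum>a\<in>UNIV. W j $ a * monom_p (idx a) (y (nj j))) = 1"
      by metis
    define u where "u j = (W j, 0 :: real^'n)" for j
    have vz: "\<forall>l\<le>nj j. snd (DIt i1 idx \<phi> Df l (c0, x0) (W j, 0)) = 0"
      and vn: "snd (DIt i1 idx \<phi> Df (Suc (nj j)) (c0, x0) (W j, 0)) = ?e1"
      if j: "j < D" for j
    proof -
      have van: "\<And>i. i < nj j \<Longrightarrow> (\<Sum>a\<in>UNIV. W j $ a * monom_p (idx a) ((perturb i1 idx \<phi> c0 ^^ i) x0)) = 0"
        using W[OF j] unfolding y_def \<phi>c_def by blast
      note r = DIt_tri[of Df "nj j" "W j" idx i1 \<phi> c0 x0, OF linDf van]
      show "\<forall>l\<le>nj j. snd (DIt i1 idx \<phi> Df l (c0, x0) (W j, 0)) = 0" using r(1) .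
      show "snd (DIt i1 idx \<phi> Df (Suc (nj j)) (c0, x0) (W j, 0)) = ?e1"
        using r(2) W[OF j] unfolding y_def \<phi>c_def by simp
    qed
    show ?thesis
    proof (intro exI[of _ u] conjI allI impI)
      fix i j assume ij: "i < j" and j: "j < D"
      have "i \<le> nj j" "i + k - 1 \<le> nj j" using ij k2 unfolding nj_def by auto
      then show "G' i z (u j) = 0" using vz[OF j] unfolding G'_def u_def z by simp
    next
      fix j assume j: "j < D"
      have "j \<le> nj j" "j + k - 1 = Suc (nj j)" using k2 unfolding nj_def by auto
      then show "G' j z (u j) \<noteq> 0" using vz[OF j] vn[OF j] unfolding G'_def u_def z by simp
    qed
  qed
  have negZ: "negligible (fst ` Z)"
  proof (rule neg_proj[of fst D G G' Z])
    show "norm (fst z - fst z') \<le> norm (z - z')" for z z' :: "(real^'m) \<times> (real^'n)"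
    proof -
      have "norm (fst w) \<le> norm w" for w :: "(real^'m) \<times> (real^'n)"
        using norm_fst_le[of "fst w" "snd w"] by simp
      from this[of "z - z'"] show ?thesis by simp
    qed
    show "DIM((real^'m) \<times> (real^'n)) < DIM(real^'m) + D" using D_ge by simp
  qed (use derG contG tri in \<open>auto simp: Z_def\<close>)
  have dm: "delay_map i1 D f x = delay_map i1 D f ((f^^(k-1)) x) \<longleftrightarrow> (\<forall>j<D. ((f^^j) x)$i1 = ((f^^(j+k-1)) x)$i1)"
    for f :: "real^'n \<Rightarrow> real^'n" and x
  proof -
    have "(f^^j) ((f^^(k-1)) x) = (f^^(j+k-1)) x" for j
      using k2 funpow_add[of j "k-1" f] by (simp add: o_def)
    then show ?thesis unfolding delay_map_def by (simp add: map_eq_conv atLeast0LessThan lessThan_iff Ball_def)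
  qed
  have A_eq: "A = ball 0 a0 - fst ` Z"
  proof (intro set_eqI iffI)
    fix c assume "c \<in> A"
    then have c: "norm c < a0" and cx: "\<And>x1. x1 \<in> cball 0 r \<Longrightarrow> (\<forall>j\<in>{1..m}. norm (x1 - \<xi> j c) \<ge> 3 * \<delta>) \<Longrightarrow>
                   delay_map i1 D (perturb i1 idx \<phi> c) x1 \<noteq>
                   delay_map i1 D (perturb i1 idx \<phi> c) ((perturb i1 idx \<phi> c ^^ (k - 1)) x1)"
      unfolding A_def by auto
    have "c \<notin> fst ` Z"
    proof
      assume "c \<in> fst ` Z"
      then obtain x where "(c, x) \<in> Z" by force
      then have x: "x \<in> cball 0 r" "\<forall>j\<in>{1..m}. norm (x - \<xi> j c) \<ge> 3 * \<delta>" "\<forall>j<D. G j (c, x) = 0"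
        unfolding Z_def by auto
      have "delay_map i1 D (perturb i1 idx \<phi> c) x = delay_map i1 D (perturb i1 idx \<phi> c) ((perturb i1 idx \<phi> c ^^ (k - 1)) x)"
        unfolding dm using x(3) by (simp add: Giter \<phi>c_def)
      then show False using cx[OF x(1) x(2)] by simp
    qed
    then show "c \<in> ball 0 a0 - fst ` Z" using c by simp
  next
    fix c assume "c \<in> ball 0 a0 - fst ` Z"
    then have c: "norm c < a0" and nz: "\<And>x. (c, x) \<notin> Z" by (auto simp: image_iff)
    show "c \<in> A" unfolding A_def
    proof (intro CollectI conjI ballI impI c)
      fix x1 assume x1: "x1 \<in> cball 0 r" and far: "\<forall>j\<in>{1..m}. 3 * \<delta> \<le> norm (x1 - \<xi> j c)"
      show "delay_map i1 D (perturb i1 idx \<phi> c) x1 \<noteq> delay_map i1 D (perturb i1 idx \<phi> c) ((perturb i1 idx \<phi> c ^^ (k - 1)) x1)"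
      proof
        assume "delay_map i1 D (perturb i1 idx \<phi> c) x1 = delay_map i1 D (perturb i1 idx \<phi> c) ((perturb i1 idx \<phi> c ^^ (k - 1)) x1)"
        then have "\<forall>j<D. G j (c, x1) = 0" unfolding dm by (simp add: Giter \<phi>c_def)
        then have "(c, x1) \<in> Z" unfolding Z_def using c x1 far by simp
        then show False using nz by blast
      qed
    qed
  qed
  define N where "N = fst ` Z"
  have nullN: "N \<in> null_sets lebesgue" using negZ unfolding N_def by (simp add: negligible_iff_null_sets)
  have mball: "measure lebesgue (ball q e - N) = measure lebesgue (ball q e)" for q :: "real^'m" and e
    by (rule measure_Diff_null_set[OF _ nullN]) simp
  have mpos: "0 < measure lebesgue (ball q e)" if "0 < e" for q :: "real^'m" and e
    using that by simp
  have lp: "lebesgue_point A p" if p: "p \<in> ball 0 a0" for p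
    unfolding lebesgue_point_def
  proof (rule tendsto_eventually)
    have "a0 - norm p > 0" using p by simp
    then show "\<forall>\<^sub>F \<epsilon> in at_right 0. measure lebesgue (A \<inter> ball p \<epsilon>) / measure lebesgue (ball p \<epsilon>) = 1"
      unfolding eventually_at_right_field
    proof (intro exI[of _ "a0 - norm p"] conjI allI impI)
      fix e :: real assume e: "0 < e" "e < a0 - norm p"
      have "ball p e \<subseteq> ball 0 a0"
      proof
        fix x assume "x \<in> ball p e"
        then have "norm (x - p) < e" by (simp add: dist_norm norm_minus_commute)
        then have "norm x < a0" using e norm_triangle_ineq[of "x - p" p] by simp
        then show "x \<in> ball 0 a0" by simp
      qed
      then have "A \<inter> ball p e = ball p e - N" unfolding A_eq N_def by blast
      then show "measure lebesgue (A \<inter> ball p e) / measure lebesgue (ball p e) = 1"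
        using mball[of p e] mpos[OF e(1), of p] by simp
    qed (use \<open>a0 - norm p > 0\<close> in simp)
  qed
  have "A \<inter> ball 0 a0 = ball 0 a0 - N" unfolding A_eq N_def by blast
  then have "rel_prob A (ball 0 a0) = 1"
    unfolding rel_prob_def using mball[of 0 a0] mpos[OF a0_pos, of 0] by simp
  then show ?thesis using lp by blast
qed


end
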